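(* Let $T=K[x_1,\ldots,x_n,y_1,\ldots,y_m]$, let $\mathfrak m=(x_1,\ldots,x_n)$ and let $I\subset T$ be a monomial ideal. The following are equivalent: (a) $(I:x_1)\cap(\mathfrak mT+I)=I$; (b) whenever $x_1$ divides $u\in G(I)$, then $u=x_1y^b$ for some $b\in\mathbb{Z}_{\ge0}^m$, and $x_jy^b\in I$ for all $j=1,\ldots,n$.
   Context: $G(I)$ denotes the unique minimal set of monomial generators of the monomial ideal $I$, and $y^b=y_1^{b_1}\cdots y_m^{b_m}$ (a monomial in the $y$-variables only). *)

theory Defs
  imports "HOL-Library.Poly_Mapping"
begin

text \<open>Polynomials over a field in variables of a finite type
  Monomials are identified with exponent vectors.\<close>

type_synonym ('v, 'k) mpoly = "('v \<Rightarrow>\<^sub>0 nat) \<Rightarrow>\<^sub>0 'k"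

definition monom :: "('v \<Rightarrow>\<^sub>0 nat) \<Rightarrow> ('v, 'k::field) mpoly" where
  "monom a = Poly_Mapping.single a 1"

definition var :: "'v \<Rightarrow> ('v, 'k::field) mpoly" where
  "var v = monom (Poly_Mapping.single v 1)"

definition is_ideal :: "('v, 'k::field) mpoly set \<Rightarrow> bool" where
  "is_ideal I \<longleftrightarrow> 0 \<in> I \<and> (\<forall>f\<in>I. \<forall>g\<in>I. f + g \<in> I) \<and> (\<forall>f\<in>I. \<forall>h. h * f \<in> I)"

definition ideal_gen :: "('v, 'k::field) mpoly set \<Rightarrow> ('v, 'k) mpoly set" where
  "ideal_gen S = \<Inter>{J. is_ideal J \<and> S \<subseteq> J}"

definition monomial_ideal :: "('v, 'k::field) mpoly set \<Rightarrow> bool" where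
  "monomial_ideal I \<longleftrightarrow> is_ideal I \<and> I = ideal_gen {monom a | a. monom a \<in> I}"

definition colon :: "('v, 'k::field) mpoly set \<Rightarrow> ('v, 'k) mpoly \<Rightarrow> ('v, 'k) mpoly set" where
  "colon I f = {g. g * f \<in> I}"

definition ideal_sum :: "('v, 'k::field) mpoly set \<Rightarrow> ('v, 'k) mpoly set \<Rightarrow> ('v, 'k) mpoly set" where
  "ideal_sum I J = {f + g | f g. f \<in> I \<and> g \<in> J}"

definition mdvd :: "('v \<Rightarrow>\<^sub>0 nat) \<Rightarrow> ('v \<Rightarrow>\<^sub>0 nat) \<Rightarrow> bool" where
  "mdvd a b \<longleftrightarrow> (\<forall>v. Poly_Mapping.lookup a v \<le> Poly_Mapping.lookup b v)"

text \<open>G(I): exponents of the minimal monomial generators of a monomial ideal,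
  i.e. the monomials of I that are minimal with respect to divisibility.\<close>
definition mingens :: "('v, 'k::field) mpoly set \<Rightarrow> ('v \<Rightarrow>\<^sub>0 nat) set" where
  "mingens I = {a. monom a \<in> I \<and> (\<forall>b. monom b \<in> I \<and> mdvd b a \<longrightarrow> b = a)}"

end

theory Submission
  imports Defs
begin

definition mid :: "('v \<Rightarrow>\<^sub>0 nat) set \<Rightarrow> ('v, 'k::field) mpoly set" where
  "mid S = {f. \<forall>a\<in>Poly_Mapping.keys f. \<exists>s\<in>S. mdvd s a}"

lemma mdvd_add: "mdvd s b \<Longrightarrow> mdvd s (c + b)"
  unfolding mdvd_def by (simp add: lookup_add add_increasing)

lemma mdvd_refl: "mdvd a a" unfolding mdvd_def by simp

lemma mdvd_trans: "mdvd a b \<Longrightarrow> mdvd b c \<Longrightarrow> mdvd a c"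
  unfolding mdvd_def using le_trans by blast

lemma is_ideal_mid: "is_ideal (mid S :: ('v, 'k::field) mpoly set)"
proof -
  have z: "(0::('v, 'k) mpoly) \<in> mid S" by (simp add: mid_def)
  have p: "f + g \<in> mid S" if "f \<in> mid S" "g \<in> mid S" for f g :: "('v, 'k) mpoly"
    using that keys_add[of f g] unfolding mid_def by blast
  have m: "h * f \<in> mid S" if f: "f \<in> mid S" for f h :: "('v, 'k) mpoly"
    unfolding mid_def
  proof (intro CollectI ballI)
    fix a assume "a \<in> Poly_Mapping.keys (h * f)"
    then obtain c b where "a = c + b" "b \<in> Poly_Mapping.keys f" using keys_mult by blast
    then show "\<exists>s\<in>S. mdvd s a" using f mdvd_add unfolding mid_def by blast
  qed
  show ?thesis unfolding is_ideal_def using z p m by blast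
qed

lemma monom_in_mid: "s \<in> S \<Longrightarrow> (monom s :: ('v, 'k::field) mpoly) \<in> mid S"
  unfolding mid_def monom_def using mdvd_refl by auto

lemma ideal_sum_closed:
  assumes "is_ideal J" "finite A" "\<forall>a\<in>A. g a \<in> J"
  shows "sum g A \<in> J"
  using assms(2,3)
proof (induction A rule: finite_induct)
  case empty then show ?case using assms(1) unfolding is_ideal_def by simp
next
  case (insert x F) then show ?case using assms(1) unfolding is_ideal_def by simp
qed

lemma poly_repr: "(f :: 'a \<Rightarrow>\<^sub>0 'b::comm_monoid_add) = (\<Sum>a\<in>Poly_Mapping.keys f. Poly_Mapping.single a (Poly_Mapping.lookup f a))"
proof (rule poly_mapping_eqI)
  fix k
  have "Poly_Mapping.lookup (\<Sum>a\<in>Poly_Mapping.keys f. Poly_Mapping.single a (Poly_Mapping.lookup f a)) k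
     = (\<Sum>a\<in>Poly_Mapping.keys f. (if a = k then Poly_Mapping.lookup f a else 0))"
    by (simp add: lookup_sum lookup_single when_def)
  also have "\<dots> = Poly_Mapping.lookup f k"
    by (simp add: sum.delta' in_keys_iff)
  finally show "Poly_Mapping.lookup f k = Poly_Mapping.lookup (\<Sum>a\<in>Poly_Mapping.keys f. Poly_Mapping.single a (Poly_Mapping.lookup f a)) k" by simp
qed

lemma mdvd_split: "mdvd s a \<Longrightarrow> a = (a - s) + s"
  unfolding mdvd_def by (intro poly_mapping_eqI) (simp add: lookup_add lookup_minus)

lemma mid_sub:
  assumes J: "is_ideal J" and S: "monom ` S \<subseteq> J"
  shows "mid S \<subseteq> (J :: ('v, 'k::field) mpoly set)"
proof
  fix f :: "('v, 'k) mpoly" assume f: "f \<in> mid S"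
  have "(\<Sum>a\<in>Poly_Mapping.keys f. Poly_Mapping.single a (Poly_Mapping.lookup f a)) \<in> J"
  proof (rule ideal_sum_closed[OF J finite_keys], intro ballI)
    fix a assume a: "a \<in> Poly_Mapping.keys f"
    then obtain s where s: "s \<in> S" "mdvd s a" using f unfolding mid_def by blast
    have "Poly_Mapping.single a (Poly_Mapping.lookup f a) =
          Poly_Mapping.single (a - s) (Poly_Mapping.lookup f a) * monom s"
      unfolding monom_def mult_single using mdvd_split[OF s(2)] by simp
    moreover have "monom s \<in> J" using S s by blast
    ultimately show "Poly_Mapping.single a (Poly_Mapping.lookup f a) \<in> J"
      using J unfolding is_ideal_def by simp
  qed
  then show "f \<in> J" using poly_repr[of f] by simp
qed

lemma ideal_gen_monom: "ideal_gen (monom ` S) = (mid S :: ('v, 'k::field) mpoly set)"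
proof
  show "ideal_gen (monom ` S) \<subseteq> (mid S :: ('v, 'k::field) mpoly set)"
    unfolding ideal_gen_def using is_ideal_mid monom_in_mid by blast
  show "(mid S :: ('v, 'k::field) mpoly set) \<subseteq> ideal_gen (monom ` S)"
    unfolding ideal_gen_def using mid_sub by blast
qed

lemma lookup_mult_monom:
  "Poly_Mapping.lookup (g * (monom e :: ('v, 'k::field) mpoly)) (a + e) = Poly_Mapping.lookup g a"
proof -
  have "g * monom e = (\<Sum>b\<in>Poly_Mapping.keys g. Poly_Mapping.single (b + e) (Poly_Mapping.lookup g b))"
    apply (subst poly_repr[of g])
    by (simp add: sum_distrib_right monom_def mult_single)
  then have "Poly_Mapping.lookup (g * monom e) (a + e) =
     (\<Sum>b\<in>Poly_Mapping.keys g. (if b = a then Poly_Mapping.lookup g b else 0))"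
    by (simp add: lookup_sum lookup_single when_def)
  also have "\<dots> = Poly_Mapping.lookup g a" by (simp add: sum.delta in_keys_iff)
  finally show ?thesis .
qed

lemma deg_less:
  assumes "mdvd b (a :: 'v::finite \<Rightarrow>\<^sub>0 nat)" "b \<noteq> a"
  shows "(\<Sum>v\<in>UNIV. Poly_Mapping.lookup b v) < (\<Sum>v\<in>UNIV. Poly_Mapping.lookup a v)"
proof -
  have "\<not> (\<forall>v. Poly_Mapping.lookup b v = Poly_Mapping.lookup a v)"
  proof
    assume "\<forall>v. Poly_Mapping.lookup b v = Poly_Mapping.lookup a v"
    then have "b = a" by (intro poly_mapping_eqI) simp
    then show False using assms(2) by simp
  qed
  then obtain v where v: "Poly_Mapping.lookup b v \<noteq> Poly_Mapping.lookup a v" by blast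
  have le: "\<forall>w\<in>UNIV. Poly_Mapping.lookup b w \<le> Poly_Mapping.lookup a w"
    using assms(1) unfolding mdvd_def by simp
  have "Poly_Mapping.lookup b v < Poly_Mapping.lookup a v"
    using le v by (simp add: order_le_neq_trans)
  then have "\<exists>w\<in>UNIV. Poly_Mapping.lookup b w < Poly_Mapping.lookup a w" by blast
  then show ?thesis
    by (rule sum_strict_mono_ex1[OF finite_UNIV le])
qed

lemma exists_mingen:
  fixes I :: "('v::finite, 'k::field) mpoly set"
  shows "monom a \<in> I \<Longrightarrow> \<exists>u\<in>mingens I. mdvd u a"
proof (induction "\<Sum>v\<in>UNIV. Poly_Mapping.lookup a v" arbitrary: a rule: less_induct)
  case less
  show ?case
  proof (cases "a \<in> mingens I")
    case True then show ?thesis using mdvd_refl by blast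
  next
    case False
    then obtain b where b: "monom b \<in> I" "mdvd b a" "b \<noteq> a"
      using less.prems unfolding mingens_def by blast
    have "(\<Sum>v\<in>UNIV. Poly_Mapping.lookup b v) < (\<Sum>v\<in>UNIV. Poly_Mapping.lookup a v)"
      using deg_less b(2,3) by blast
    then obtain u where "u \<in> mingens I" "mdvd u b" using less.hyps b(1) by blast
    then show ?thesis using b mdvd_trans by blast
  qed
qed

theorem lemma1p8:
  fixes X :: "'v::finite set" and x1 :: 'v and I :: "('v, 'k::field) mpoly set"
  assumes "x1 \<in> X"
    and "monomial_ideal I"
  shows "(colon I (var x1) \<inter> ideal_sum (ideal_gen (var ` X)) I = I) \<longleftrightarrow>
    (\<forall>u \<in> mingens I. Poly_Mapping.lookup u x1 \<ge> 1 \<longrightarrow>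
       (\<exists>b. Poly_Mapping.keys b \<subseteq> - X \<and> u = Poly_Mapping.single x1 1 + b \<and>
            (\<forall>j \<in> X. monom (Poly_Mapping.single j 1 + b) \<in> I)))"
proof -
  define e1 :: "'v \<Rightarrow>\<^sub>0 nat" where "e1 = Poly_Mapping.single x1 1"
  have idI: "is_ideal I" using assms(2) unfolding monomial_ideal_def by blast
  define E where "E = {a. monom a \<in> (I :: ('v,'k) mpoly set)}"
  have eqE: "{monom a | a. monom a \<in> I} = monom ` E" unfolding E_def by blast
  have "I = ideal_gen {monom a | a. monom a \<in> I}"
    using assms(2) unfolding monomial_ideal_def by blast
  also have "\<dots> = ideal_gen (monom ` E)" by (simp only: eqE)
  also have "\<dots> = mid E" by (rule ideal_gen_monom)
  finally have Imid: "I = mid E" .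
  have up: "monom c \<in> I" if "monom a \<in> I" "mdvd a c" for a c
  proof -
    have "(monom c :: ('v,'k) mpoly) = monom (c - a) * monom a"
      unfolding monom_def mult_single using mdvd_split[OF that(2)] by simp
    then show ?thesis using idI that(1) unfolding is_ideal_def by simp
  qed
  have memI: "f \<in> I \<longleftrightarrow> (\<forall>a\<in>Poly_Mapping.keys f. monom a \<in> I)" for f
  proof -
    have "f \<in> I \<longleftrightarrow> (\<forall>a\<in>Poly_Mapping.keys f. \<exists>s\<in>E. mdvd s a)"
      by (subst Imid) (simp add: mid_def)
    also have "\<dots> \<longleftrightarrow> (\<forall>a\<in>Poly_Mapping.keys f. monom a \<in> I)"
      unfolding E_def using up mdvd_refl by blast
    finally show ?thesis .
  qed
  have varm: "var ` X = monom ` ((\<lambda>j. Poly_Mapping.single j 1) ` X)"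
    unfolding var_def by auto
  have mdvd_single: "mdvd (Poly_Mapping.single j 1) a \<longleftrightarrow> Poly_Mapping.lookup a j \<ge> 1" for j a
    unfolding mdvd_def by (auto simp: lookup_single when_def)
  have memm: "f \<in> ideal_gen (var ` X) \<longleftrightarrow> (\<forall>a\<in>Poly_Mapping.keys f. \<exists>j\<in>X. Poly_Mapping.lookup a j \<ge> 1)"
    for f :: "('v,'k) mpoly"
  proof -
    have "f \<in> ideal_gen (var ` X) \<longleftrightarrow> (\<forall>a\<in>Poly_Mapping.keys f. \<exists>s\<in>(\<lambda>j. Poly_Mapping.single j 1) ` X. mdvd s a)"
      by (simp only: varm ideal_gen_monom mid_def mem_Collect_eq)
    also have "\<dots> \<longleftrightarrow> (\<forall>a\<in>Poly_Mapping.keys f. \<exists>j\<in>X. mdvd (Poly_Mapping.single j 1) a)"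
      by blast
    also have "\<dots> \<longleftrightarrow> (\<forall>a\<in>Poly_Mapping.keys f. \<exists>j\<in>X. Poly_Mapping.lookup a j \<ge> 1)"
      by (simp only: mdvd_single)
    finally show ?thesis .
  qed
  have monmul: "monom a * var x1 = (monom (a + e1) :: ('v,'k) mpoly)" for a
    unfolding var_def monom_def e1_def mult_single by simp
  have colonmem: "monom (a + e1) \<in> I" if "g \<in> colon I (var x1)" "a \<in> Poly_Mapping.keys g" for g a
  proof -
    have "g * monom e1 \<in> I" using that(1) unfolding colon_def var_def e1_def by simp
    moreover have "a + e1 \<in> Poly_Mapping.keys (g * monom e1)"
      using that(2) lookup_mult_monom[of g e1 a] by (simp add: in_keys_iff)
    ultimately show ?thesis using memI by blast
  qed
  have lk_e1: "Poly_Mapping.lookup e1 v = (if v = x1 then 1 else 0)" for v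
    unfolding e1_def by (simp add: lookup_single when_def)
  define C where "C = (\<forall>a. monom (a + e1) \<in> I \<and> (\<exists>j\<in>X. Poly_Mapping.lookup a j \<ge> 1) \<longrightarrow> monom a \<in> I)"
  have AC: "(colon I (var x1) \<inter> ideal_sum (ideal_gen (var ` X)) I = I) \<longleftrightarrow> C"
  proof
    assume A: "colon I (var x1) \<inter> ideal_sum (ideal_gen (var ` X)) I = I"
    show C unfolding C_def
    proof (intro allI impI)
      fix a assume h: "monom (a + e1) \<in> I \<and> (\<exists>j\<in>X. 1 \<le> Poly_Mapping.lookup a j)"
      have "monom a \<in> colon I (var x1)" unfolding colon_def using h monmul by simp
      moreover have "(monom a :: ('v,'k) mpoly) \<in> ideal_gen (var ` X)"
        using h memm unfolding monom_def by simp
      then have "monom a \<in> ideal_sum (ideal_gen (var ` X)) I"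
        unfolding ideal_sum_def using idI unfolding is_ideal_def by force
      ultimately show "monom a \<in> I" using A by blast
    qed
  next
    assume C: C
    show "colon I (var x1) \<inter> ideal_sum (ideal_gen (var ` X)) I = I"
    proof
      show "I \<subseteq> colon I (var x1) \<inter> ideal_sum (ideal_gen (var ` X)) I"
      proof
        fix g assume g: "g \<in> I"
        have "g * var x1 \<in> I" using g idI unfolding is_ideal_def by (metis mult.commute)
        moreover have "(0::('v,'k) mpoly) \<in> ideal_gen (var ` X)" using memm by simp
        then have "g \<in> ideal_sum (ideal_gen (var ` X)) I"
          unfolding ideal_sum_def using g by force
        ultimately show "g \<in> colon I (var x1) \<inter> ideal_sum (ideal_gen (var ` X)) I"
          unfolding colon_def by simp
      qed
    next
      show "colon I (var x1) \<inter> ideal_sum (ideal_gen (var ` X)) I \<subseteq> I"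
      proof
        fix g assume g: "g \<in> colon I (var x1) \<inter> ideal_sum (ideal_gen (var ` X)) I"
        then have "g \<in> ideal_sum (ideal_gen (var ` X)) I" by simp
        then obtain p q where pq: "g = p + q" "p \<in> ideal_gen (var ` X)" "q \<in> I"
          unfolding ideal_sum_def mem_Collect_eq by (elim exE conjE) simp
        show "g \<in> I" unfolding memI[of g]
        proof
          fix a assume a: "a \<in> Poly_Mapping.keys g"
          then have "a \<in> Poly_Mapping.keys p \<or> a \<in> Poly_Mapping.keys q"
            using keys_add[of p q] a unfolding pq(1) by blast
          then show "monom a \<in> I"
          proof
            assume "a \<in> Poly_Mapping.keys q" then show ?thesis using pq(3) memI by blast
          next
            assume "a \<in> Poly_Mapping.keys p"
            then have "\<exists>j\<in>X. Poly_Mapping.lookup a j \<ge> 1" using pq(2) memm by blast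
            moreover have "monom (a + e1) \<in> I" using colonmem g a by blast
            ultimately show ?thesis using C unfolding C_def by blast
          qed
        qed
      qed
    qed
  qed
  have CB: "C \<longleftrightarrow> (\<forall>u \<in> mingens I. Poly_Mapping.lookup u x1 \<ge> 1 \<longrightarrow>
       (\<exists>b. Poly_Mapping.keys b \<subseteq> - X \<and> u = Poly_Mapping.single x1 1 + b \<and>
            (\<forall>j \<in> X. monom (Poly_Mapping.single j 1 + b) \<in> I)))"
  proof
    assume C: C
    show "\<forall>u \<in> mingens I. Poly_Mapping.lookup u x1 \<ge> 1 \<longrightarrow>
       (\<exists>b. Poly_Mapping.keys b \<subseteq> - X \<and> u = Poly_Mapping.single x1 1 + b \<and>
            (\<forall>j \<in> X. monom (Poly_Mapping.single j 1 + b) \<in> I))"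
    proof (intro ballI impI)
      fix u assume u: "u \<in> mingens I" and u1: "Poly_Mapping.lookup u x1 \<ge> 1"
      define b where "b = u - e1"
      have lb: "Poly_Mapping.lookup b v = Poly_Mapping.lookup u v - (if v = x1 then 1 else 0)" for v
        unfolding b_def by (simp add: lookup_minus lk_e1)
      have ue: "u = e1 + b"
        by (rule poly_mapping_eqI) (use u1 in \<open>simp add: lookup_add lb lk_e1\<close>)
      have uI: "monom u \<in> I" using u unfolding mingens_def by blast
      have keysb: "Poly_Mapping.keys b \<subseteq> - X"
      proof
        fix j assume j: "j \<in> Poly_Mapping.keys b"
        show "j \<in> - X"
        proof
          assume "j \<in> X"
          moreover have "Poly_Mapping.lookup b j \<ge> 1" using j by (simp add: in_keys_iff)
          moreover have "monom (b + e1) \<in> I" using uI ue by (simp add: add.commute)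
          ultimately have bI: "monom b \<in> I" using C unfolding C_def by blast
          have "mdvd b u" unfolding mdvd_def using lb by simp
          then have "b = u" using u bI unfolding mingens_def by blast
          then show False using lb[of x1] u1 by simp
        qed
      qed
      have "\<forall>j\<in>X. monom (Poly_Mapping.single j 1 + b) \<in> I"
      proof
        fix j assume j: "j \<in> X"
        have "mdvd u (Poly_Mapping.single j 1 + b + e1)"
          unfolding ue mdvd_def by (simp add: lookup_add)
        then have "monom (Poly_Mapping.single j 1 + b + e1) \<in> I" using up uI by blast
        moreover have "Poly_Mapping.lookup (Poly_Mapping.single j 1 + b) j \<ge> 1"
          by (simp add: lookup_add)
        ultimately show "monom (Poly_Mapping.single j 1 + b) \<in> I"
          using C j unfolding C_def by blast
      qed
      then show "\<exists>b. Poly_Mapping.keys b \<subseteq> - X \<and> u = Poly_Mapping.single x1 1 + b \<and>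
            (\<forall>j \<in> X. monom (Poly_Mapping.single j 1 + b) \<in> I)"
        using keysb ue unfolding e1_def by blast
    qed
  next
    assume B: "\<forall>u \<in> mingens I. Poly_Mapping.lookup u x1 \<ge> 1 \<longrightarrow>
       (\<exists>b. Poly_Mapping.keys b \<subseteq> - X \<and> u = Poly_Mapping.single x1 1 + b \<and>
            (\<forall>j \<in> X. monom (Poly_Mapping.single j 1 + b) \<in> I))"
    show C unfolding C_def
    proof (intro allI impI)
      fix a assume h: "monom (a + e1) \<in> I \<and> (\<exists>j\<in>X. 1 \<le> Poly_Mapping.lookup a j)"
      then obtain j where j: "j \<in> X" "1 \<le> Poly_Mapping.lookup a j" by blast
      obtain u where u: "u \<in> mingens I" "mdvd u (a + e1)" using h exists_mingen by blast
      have uI: "monom u \<in> I" using u unfolding mingens_def by blast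
      have ule: "Poly_Mapping.lookup u v \<le> Poly_Mapping.lookup a v + (if v = x1 then 1 else 0)" for v
        using u(2) unfolding mdvd_def by (simp add: lookup_add lk_e1)
      show "monom a \<in> I"
      proof (cases "Poly_Mapping.lookup u x1 = 0")
        case True
        have "mdvd u a" unfolding mdvd_def
        proof
          fix v show "Poly_Mapping.lookup u v \<le> Poly_Mapping.lookup a v"
            using ule[of v] True by (cases "v = x1") auto
        qed
        then show ?thesis using up uI by blast
      next
        case False
        then obtain b where b: "Poly_Mapping.keys b \<subseteq> - X" "u = Poly_Mapping.single x1 1 + b"
            "\<forall>j \<in> X. monom (Poly_Mapping.single j 1 + b) \<in> I"
          using B u(1) by fastforce
        have "mdvd (Poly_Mapping.single j 1 + b) a" unfolding mdvd_def
        proof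
          fix v
          show "Poly_Mapping.lookup (Poly_Mapping.single j 1 + b) v \<le> Poly_Mapping.lookup a v"
          proof (cases "v = j")
            case True
            then have "Poly_Mapping.lookup b v = 0" using b(1) j(1) by (auto simp: in_keys_iff)
            then show ?thesis using True j(2) by (simp add: lookup_add)
          next
            case False
            have "Poly_Mapping.lookup b v + (if v = x1 then 1 else 0) \<le> Poly_Mapping.lookup a v + (if v = x1 then 1 else 0)"
              using ule[of v] b(2) by (simp add: lookup_add lookup_single when_def split: if_splits)
            then show ?thesis using False by (simp add: lookup_add lookup_single when_def)
          qed
        qed
        then show ?thesis using up b(3) j(1) by blast
      qed
    qed
  qed
  show ?thesis using AC CB by simp
qed

end
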